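(* Let $(G,\cdot)$ be a WIPL with identity $e$, let $(H,\circ)$ be a WIPL with identity $e'$, and let $(A,B,C)$ be an isotopism from $(G,\cdot)$ to $(H,\circ)$. Put $a'=eA$ and $b'=eB$. Then $C$ is an isomorphism from $(G,\cdot)$ onto $(H,\circ)$ if and only if $(J_\rho' L_{b'}' J_\lambda',\ J_\lambda' R_{a'}' J_\rho',\ I)\in AUT(H,\circ)$. Moreover, when these equivalent conditions hold, $(J_\lambda' R_{a'}' J_\rho',\ J_\rho' L_{b'}' J_\lambda',\ R_{a'}'L_{b'}')\in AUT(H,\circ)$, and if in addition $y\circ y=e'$ for all $y\in H$, then $(R_{a'}',L_{b'}',R_{a'}'L_{b'}')\in AUT(H,\circ)$.
   Context: Maps are written on the right of their arguments ($xU$) and composed left to right: $UV$ means first apply $U$, then $V$; $I$ is the identity map. For a loop $(L,\cdot)$ with identity $e$, $x^\rho$ and $x^\lambda$ denote the right and left inverses of $x$ ($x x^\rho=e=x^\lambda x$), and $J_\rho:x\mapsto x^\rho$, $J_\lambda:x\mapsto x^\lambda$, $L_x:y\mapsto xy$, $R_x:y\mapsto yx$. For the loop $(H,\circ)$ with identity $e'$ the corresponding maps are denoted $J_\rho'$ ($y\mapsto y^{\rho'}$), $J_\lambda'$ ($y\mapsto y^{\lambda'}$), $L_y':z\mapsto y\circ z$, $R_y':z\mapsto z\circ y$. $L$ is a weak inverse property loop (WIPL) if $xy\cdot z=e$ implies $x\cdot yz=e$ for all $x,y,z\in L$. A triple $(U,V,W)$ of bijections $G\to H$ between loops $(G,\cdot)$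 and $(H,\circ)$ is an isotopism if $xU\circ yV=(x\cdot y)W$ for all $x,y\in G$; an autotopism is an isotopism of a loop to itself, and $AUT(H,\circ)$ denotes the group of autotopisms of $(H,\circ)$ under componentwise composition. *)

theory Defs
  imports Main
begin

text \<open>A loop is given by a carrier set, a binary operation and an identity element.
  Maps are represented as HOL functions; only their values on the carrier matter.\<close>

definition loop :: "'a set \<Rightarrow> ('a \<Rightarrow> 'a \<Rightarrow> 'a) \<Rightarrow> 'a \<Rightarrow> bool" where
  "loop L m e \<longleftrightarrow>
     e \<in> L \<and>
     (\<forall>x\<in>L. \<forall>y\<in>L. m x y \<in> L) \<and>
     (\<forall>x\<in>L. m e x = x \<and> m x e = x) \<and>
     (\<forall>a\<in>L. \<forall>b\<in>L. \<exists>!x. x \<in> L \<and> m a x = b) \<and>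
     (\<forall>a\<in>L. \<forall>b\<in>L. \<exists>!y. y \<in> L \<and> m y a = b)"

definition WIPL :: "'a set \<Rightarrow> ('a \<Rightarrow> 'a \<Rightarrow> 'a) \<Rightarrow> 'a \<Rightarrow> bool" where
  "WIPL L m e \<longleftrightarrow> loop L m e \<and>
     (\<forall>x\<in>L. \<forall>y\<in>L. \<forall>z\<in>L. m (m x y) z = e \<longrightarrow> m x (m y z) = e)"

text \<open>Right inverse: x x^rho = e; left inverse: x^lambda x = e.\<close>
definition rinv :: "'a set \<Rightarrow> ('a \<Rightarrow> 'a \<Rightarrow> 'a) \<Rightarrow> 'a \<Rightarrow> 'a \<Rightarrow> 'a" where
  "rinv L m e x = (THE y. y \<in> L \<and> m x y = e)"

definition linv :: "'a set \<Rightarrow> ('a \<Rightarrow> 'a \<Rightarrow> 'a) \<Rightarrow> 'a \<Rightarrow> 'a \<Rightarrow> 'a" where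
  "linv L m e x = (THE y. y \<in> L \<and> m y x = e)"

definition isotopism ::
  "'a set \<Rightarrow> ('a \<Rightarrow> 'a \<Rightarrow> 'a) \<Rightarrow> 'b set \<Rightarrow> ('b \<Rightarrow> 'b \<Rightarrow> 'b) \<Rightarrow>
   ('a \<Rightarrow> 'b) \<Rightarrow> ('a \<Rightarrow> 'b) \<Rightarrow> ('a \<Rightarrow> 'b) \<Rightarrow> bool" where
  "isotopism G m H n U V W \<longleftrightarrow>
     bij_betw U G H \<and> bij_betw V G H \<and> bij_betw W G H \<and>
     (\<forall>x\<in>G. \<forall>y\<in>G. n (U x) (V y) = W (m x y))"

definition autotopism ::
  "'b set \<Rightarrow> ('b \<Rightarrow> 'b \<Rightarrow> 'b) \<Rightarrow> ('b \<Rightarrow> 'b) \<Rightarrow> ('b \<Rightarrow> 'b) \<Rightarrow> ('b \<Rightarrow> 'b) \<Rightarrow> bool" where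
  "autotopism H n U V W \<longleftrightarrow> isotopism H n H n U V W"

definition loop_iso ::
  "'a set \<Rightarrow> ('a \<Rightarrow> 'a \<Rightarrow> 'a) \<Rightarrow> 'b set \<Rightarrow> ('b \<Rightarrow> 'b \<Rightarrow> 'b) \<Rightarrow> ('a \<Rightarrow> 'b) \<Rightarrow> bool" where
  "loop_iso G m H n C \<longleftrightarrow> bij_betw C G H \<and> (\<forall>x\<in>G. \<forall>y\<in>G. C (m x y) = n (C x) (C y))"

end

theory Submission
  imports Defs
begin

lemma loop_e: "loop L m e \<Longrightarrow> e \<in> L" by (simp add: loop_def)
lemma loop_closed: "loop L m e \<Longrightarrow> x \<in> L \<Longrightarrow> y \<in> L \<Longrightarrow> m x y \<in> L" by (simp add: loop_def)
lemma loop_lid: "loop L m e \<Longrightarrow> x \<in> L \<Longrightarrow> m e x = x" by (simp add: loop_def)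
lemma loop_rid: "loop L m e \<Longrightarrow> x \<in> L \<Longrightarrow> m x e = x" by (simp add: loop_def)
lemma loop_ldiv: "loop L m e \<Longrightarrow> a \<in> L \<Longrightarrow> b \<in> L \<Longrightarrow> \<exists>!x. x \<in> L \<and> m a x = b"
  unfolding loop_def by (elim conjE) (drule bspec, assumption, drule bspec, assumption, assumption)
lemma loop_rdiv: "loop L m e \<Longrightarrow> a \<in> L \<Longrightarrow> b \<in> L \<Longrightarrow> \<exists>!x. x \<in> L \<and> m x a = b"
  unfolding loop_def by (elim conjE) (drule bspec, assumption, drule bspec, assumption, assumption)
lemma loop_lcancel:
  assumes "loop L m e" "a \<in> L" "x \<in> L" "y \<in> L" "m a x = m a y" shows "x = y"
proof -
  have "\<exists>!z. z \<in> L \<and> m a z = m a x" using loop_ldiv[OF assms(1,2) loop_closed[OF assms(1,2,3)]] .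
  then obtain z where "\<forall>w. w \<in> L \<and> m a w = m a x \<longrightarrow> w = z" by (elim ex1E) blast
  hence "x = z" "y = z" using assms(3,4,5) by auto
  thus ?thesis by simp
qed
lemma loop_rcancel:
  assumes "loop L m e" "a \<in> L" "x \<in> L" "y \<in> L" "m x a = m y a" shows "x = y"
proof -
  have "\<exists>!z. z \<in> L \<and> m z a = m x a" using loop_rdiv[OF assms(1,2) loop_closed[OF assms(1,3,2)]] .
  then obtain z where "\<forall>w. w \<in> L \<and> m w a = m x a \<longrightarrow> w = z" by (elim ex1E) blast
  hence "x = z" "y = z" using assms(3,4,5) by auto
  thus ?thesis by simp
qed
lemma loop_lsolve: "loop L m e \<Longrightarrow> a \<in> L \<Longrightarrow> b \<in> L \<Longrightarrow> \<exists>x\<in>L. m a x = b"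
proof -
  assume "loop L m e" "a \<in> L" "b \<in> L"
  hence "\<exists>!x. x \<in> L \<and> m a x = b" by (rule loop_ldiv)
  hence "\<exists>x. x \<in> L \<and> m a x = b" by (rule ex1_implies_ex)
  thus ?thesis by (simp add: Bex_def)
qed
lemma loop_rsolve: "loop L m e \<Longrightarrow> a \<in> L \<Longrightarrow> b \<in> L \<Longrightarrow> \<exists>x\<in>L. m x a = b"
proof -
  assume "loop L m e" "a \<in> L" "b \<in> L"
  hence "\<exists>!x. x \<in> L \<and> m x a = b" by (rule loop_rdiv)
  hence "\<exists>x. x \<in> L \<and> m x a = b" by (rule ex1_implies_ex)
  thus ?thesis by (simp add: Bex_def)
qed
lemma rinv_prop:
  assumes "loop L m e" "x \<in> L" shows "rinv L m e x \<in> L \<and> m x (rinv L m e x) = e"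
proof -
  have "\<exists>!y. y \<in> L \<and> m x y = e" using loop_ldiv[OF assms(1,2) loop_e[OF assms(1)]] .
  thus ?thesis unfolding rinv_def by (rule theI')
qed
lemma linv_prop:
  assumes "loop L m e" "x \<in> L" shows "linv L m e x \<in> L \<and> m (linv L m e x) x = e"
proof -
  have "\<exists>!y. y \<in> L \<and> m y x = e" using loop_rdiv[OF assms(1,2) loop_e[OF assms(1)]] .
  thus ?thesis unfolding linv_def by (rule theI')
qed
lemma rinv_unique:
  assumes "loop L m e" "x \<in> L" "y \<in> L" "m x y = e" shows "rinv L m e x = y"
  proof -
  have "rinv L m e x \<in> L" "m x (rinv L m e x) = m x y" using rinv_prop[OF assms(1,2)] assms(4) by auto
  thus ?thesis by (rule loop_lcancel[OF assms(1,2) _ assms(3)])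
qed
lemma linv_unique:
  assumes "loop L m e" "x \<in> L" "y \<in> L" "m y x = e" shows "linv L m e x = y"
  proof -
  have "linv L m e x \<in> L" "m (linv L m e x) x = m y x" using linv_prop[OF assms(1,2)] assms(4) by auto
  thus ?thesis by (rule loop_rcancel[OF assms(1,2) _ assms(3)])
qed
lemma wip1: "WIPL L m e \<Longrightarrow> x \<in> L \<Longrightarrow> y \<in> L \<Longrightarrow> z \<in> L \<Longrightarrow> m (m x y) z = e \<Longrightarrow> m x (m y z) = e"
  unfolding WIPL_def by blast
lemma WIPL_loop: "WIPL L m e \<Longrightarrow> loop L m e"
  unfolding WIPL_def by (rule conjunct1)
lemma wip2:
  assumes W: "WIPL L m e" and xyz: "x \<in> L" "y \<in> L" "z \<in> L" and h: "m x (m y z) = e"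
  shows "m (m x y) z = e"
proof -
  have l: "loop L m e" using W by (rule WIPL_loop)
  have xyL: "m x y \<in> L" by (rule loop_closed[OF l xyz(1,2)])
  define w where "w = rinv L m e (m x y)"
  have wp: "w \<in> L \<and> m (m x y) w = e" unfolding w_def by (rule rinv_prop[OF l xyL])
  have wL: "w \<in> L" using wp by (rule conjunct1)
  have w1: "m (m x y) w = e" using wp by (rule conjunct2)
  have h2: "m x (m y w) = e" by (rule wip1[OF W xyz(1,2) wL w1])
  have r1: "rinv L m e x = m y w" by (rule rinv_unique[OF l xyz(1) loop_closed[OF l xyz(2) wL] h2])
  have r2: "rinv L m e x = m y z" by (rule rinv_unique[OF l xyz(1) loop_closed[OF l xyz(2,3)] h])
  have "m y w = m y z" using r1 r2 by (rule subst)
  hence "w = z" by (rule loop_lcancel[OF l xyz(2) wL xyz(3)])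
  thus ?thesis using w1 by (rule subst)
qed
lemma bij_L: assumes l: "loop L m e" and a: "a \<in> L" shows "bij_betw (\<lambda>x. m a x) L L"
  unfolding bij_betw_def
proof
  show "inj_on (\<lambda>x. m a x) L" unfolding inj_on_def using loop_lcancel[OF l a] by blast
  show "(\<lambda>x. m a x) ` L = L"
  proof
    show "(\<lambda>x. m a x) ` L \<subseteq> L" using loop_closed[OF l a] by blast
    show "L \<subseteq> (\<lambda>x. m a x) ` L"
    proof
      fix b assume "b \<in> L"
      then obtain x where "x \<in> L" "m a x = b" using loop_lsolve[OF l a] by blast
      thus "b \<in> (\<lambda>x. m a x) ` L" by blast
    qed
  qed
qed
lemma bij_R: assumes l: "loop L m e" and a: "a \<in> L" shows "bij_betw (\<lambda>x. m x a) L L"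
  unfolding bij_betw_def
proof
  show "inj_on (\<lambda>x. m x a) L" unfolding inj_on_def using loop_rcancel[OF l a] by blast
  show "(\<lambda>x. m x a) ` L = L"
  proof
    show "(\<lambda>x. m x a) ` L \<subseteq> L" using loop_closed[OF l _ a] by blast
    show "L \<subseteq> (\<lambda>x. m x a) ` L"
    proof
      fix b assume "b \<in> L"
      then obtain x where "x \<in> L" "m x a = b" using loop_rsolve[OF l a] by blast
      thus "b \<in> (\<lambda>x. m x a) ` L" by blast
    qed
  qed
qed

theorem mainTheorem3:
  fixes G :: "'a set" and m :: "'a \<Rightarrow> 'a \<Rightarrow> 'a" and e :: 'a
    and H :: "'b set" and n :: "'b \<Rightarrow> 'b \<Rightarrow> 'b" and e' :: 'b
    and A B C :: "'a \<Rightarrow> 'b"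
  assumes "WIPL G m e" and "WIPL H n e'"
    and "isotopism G m H n A B C"
  defines "a' \<equiv> A e" and "b' \<equiv> B e"
  shows "(loop_iso G m H n C \<longleftrightarrow>
           autotopism H n (\<lambda>x. linv H n e' (n b' (rinv H n e' x)))
                          (\<lambda>x. rinv H n e' (n (linv H n e' x) a'))
                          (\<lambda>x. x))
      \<and> (loop_iso G m H n C \<longrightarrow>
           autotopism H n (\<lambda>x. rinv H n e' (n (linv H n e' x) a'))
                          (\<lambda>x. linv H n e' (n b' (rinv H n e' x)))
                          (\<lambda>x. n b' (n x a'))
           \<and> ((\<forall>y\<in>H. n y y = e') \<longrightarrow>
                autotopism H n (\<lambda>x. n x a') (\<lambda>x. n b' x) (\<lambda>x. n b' (n x a'))))"
proof -
  define U where "U = (\<lambda>x. linv H n e' (n b' (rinv H n e' x)))"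
  define V where "V = (\<lambda>x. rinv H n e' (n (linv H n e' x) a'))"
  have WH: "WIPL H n e'" by fact
  have lG: "loop G m e" using assms(1) by (rule WIPL_loop)
  have lH: "loop H n e'" using assms(2) by (rule WIPL_loop)
  have bA: "bij_betw A G H" and bB: "bij_betw B G H" and bC: "bij_betw C G H"
    and iso: "\<And>x y. x \<in> G \<Longrightarrow> y \<in> G \<Longrightarrow> n (A x) (B y) = C (m x y)"
    using assms(3) unfolding isotopism_def by auto
  have eG: "e \<in> G" using loop_e[OF lG] .
  have e'H: "e' \<in> H" using loop_e[OF lH] .
  have aH: "a' \<in> H" using bij_betw_apply[OF bA eG] a'_def by simp
  have bH: "b' \<in> H" using bij_betw_apply[OF bB eG] b'_def by simp
  have AH: "\<And>x. x \<in> G \<Longrightarrow> A x \<in> H" using bij_betw_apply[OF bA] by blast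
  have BH: "\<And>x. x \<in> G \<Longrightarrow> B x \<in> H" using bij_betw_apply[OF bB] by blast
  have CH: "\<And>x. x \<in> G \<Longrightarrow> C x \<in> H" using bij_betw_apply[OF bC] by blast
  have Csurj: "\<And>y. y \<in> H \<Longrightarrow> \<exists>x\<in>G. C x = y" using bC unfolding bij_betw_def by blast
  have cl: "\<And>x y. x \<in> H \<Longrightarrow> y \<in> H \<Longrightarrow> n x y \<in> H" using loop_closed[OF lH] .
  have Ab: "\<And>x. x \<in> G \<Longrightarrow> n (A x) b' = C x"
    using iso[OF _ eG] loop_rid[OF lG] b'_def by simp
  have aB: "\<And>x. x \<in> G \<Longrightarrow> n a' (B x) = C x"
    using iso[OF eG] loop_lid[OF lG] a'_def by simp
  have UH: "\<And>x. x \<in> H \<Longrightarrow> U x \<in> H"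
    unfolding U_def using linv_prop[OF lH] rinv_prop[OF lH] cl bH by blast
  have VH: "\<And>x. x \<in> H \<Longrightarrow> V x \<in> H"
    unfolding V_def using linv_prop[OF lH] rinv_prop[OF lH] cl aH by blast
  have K1: "\<And>x. x \<in> H \<Longrightarrow> n (U x) b' = x"
  proof -
    fix x assume xH: "x \<in> H"
    have r: "rinv H n e' x \<in> H" "n x (rinv H n e' x) = e'" using rinv_prop[OF lH xH] by auto
    have "n (U x) (n b' (rinv H n e' x)) = e'" unfolding U_def using linv_prop[OF lH cl[OF bH r(1)]] by blast
    hence "n (n (U x) b') (rinv H n e' x) = e'" using wip2[OF WH UH[OF xH] bH r(1)] by blast
    hence "n (n (U x) b') (rinv H n e' x) = n x (rinv H n e' x)" using r(2) by simp
    thus "n (U x) b' = x" by (rule loop_rcancel[OF lH r(1) cl[OF UH[OF xH] bH] xH])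
  qed
  have K2: "\<And>x. x \<in> H \<Longrightarrow> n a' (V x) = x"
  proof -
    fix x assume xH: "x \<in> H"
    have r: "linv H n e' x \<in> H" "n (linv H n e' x) x = e'" using linv_prop[OF lH xH] by auto
    have "n (n (linv H n e' x) a') (V x) = e'" unfolding V_def using rinv_prop[OF lH cl[OF r(1) aH]] by blast
    hence "n (linv H n e' x) (n a' (V x)) = e'" using wip1[OF WH r(1) aH VH[OF xH]] by blast
    hence "n (linv H n e' x) (n a' (V x)) = n (linv H n e' x) x" using r(2) by simp
    thus "n a' (V x) = x" by (rule loop_lcancel[OF lH r(1) cl[OF aH VH[OF xH]] xH])
  qed
  have UR1: "\<And>x. x \<in> H \<Longrightarrow> U (n x b') = x"
  proof -
    fix x assume xH: "x \<in> H"
    have "n (U (n x b')) b' = n x b'" using K1[OF cl[OF xH bH]] .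
    thus "U (n x b') = x" by (rule loop_rcancel[OF lH bH UH[OF cl[OF xH bH]] xH])
  qed
  have VL1: "\<And>x. x \<in> H \<Longrightarrow> V (n a' x) = x"
  proof -
    fix x assume xH: "x \<in> H"
    have "n a' (V (n a' x)) = n a' x" using K2[OF cl[OF aH xH]] .
    thus "V (n a' x) = x" by (rule loop_lcancel[OF lH aH VH[OF cl[OF aH xH]] xH])
  qed
  have bU: "bij_betw U H H"
  proof (rule bij_betw_byWitness[where f'="\<lambda>x. n x b'"])
    show "\<forall>a\<in>H. n (U a) b' = a" using K1 by blast
    show "\<forall>a\<in>H. U (n a b') = a" using UR1 by blast
    show "U ` H \<subseteq> H" using UH by blast
    show "(\<lambda>x. n x b') ` H \<subseteq> H" using cl[OF _ bH] by blast
  qed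
  have bV: "bij_betw V H H"
  proof (rule bij_betw_byWitness[where f'="\<lambda>x. n a' x"])
    show "\<forall>a\<in>H. n a' (V a) = a" using K2 by blast
    show "\<forall>a\<in>H. V (n a' a) = a" using VL1 by blast
    show "V ` H \<subseteq> H" using VH by blast
    show "(\<lambda>x. n a' x) ` H \<subseteq> H" using cl[OF aH] by blast
  qed
  have bI: "bij_betw (\<lambda>x. x) H H" using bij_betw_id unfolding id_def .
  have AU: "\<And>x. x \<in> G \<Longrightarrow> A x = U (C x)"
  proof -
    fix x assume xG: "x \<in> G"
    have "n (A x) b' = n (U (C x)) b'" using Ab[OF xG] K1[OF CH[OF xG]] by simp
    thus "A x = U (C x)" by (rule loop_rcancel[OF lH bH AH[OF xG] UH[OF CH[OF xG]]])
  qed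
  have BV: "\<And>x. x \<in> G \<Longrightarrow> B x = V (C x)"
  proof -
    fix x assume xG: "x \<in> G"
    have "n a' (B x) = n a' (V (C x))" using aB[OF xG] K2[OF CH[OF xG]] by simp
    thus "B x = V (C x)" by (rule loop_lcancel[OF lH aH BH[OF xG] VH[OF CH[OF xG]]])
  qed
  have part1: "loop_iso G m H n C \<longleftrightarrow> autotopism H n U V (\<lambda>x. x)"
  proof
    assume ci: "loop_iso G m H n C"
    have "\<forall>x\<in>H. \<forall>y\<in>H. n (U x) (V y) = n x y"
    proof (intro ballI)
      fix x y assume xy: "x \<in> H" "y \<in> H"
      obtain g where g: "g \<in> G" "C g = x" using Csurj[OF xy(1)] by blast
      obtain h where h: "h \<in> G" "C h = y" using Csurj[OF xy(2)] by blast
      have "n (U x) (V y) = n (A g) (B h)" using AU BV g h by simp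
      also have "\<dots> = C (m g h)" using iso g h by simp
      also have "\<dots> = n x y" using ci g h unfolding loop_iso_def by simp
      finally show "n (U x) (V y) = n x y" .
    qed
    thus "autotopism H n U V (\<lambda>x. x)" unfolding autotopism_def isotopism_def using bU bV bI by simp
  next
    assume "autotopism H n U V (\<lambda>x. x)"
    hence P: "\<And>x y. x \<in> H \<Longrightarrow> y \<in> H \<Longrightarrow> n (U x) (V y) = n x y"
      unfolding autotopism_def isotopism_def by simp
    show "loop_iso G m H n C" unfolding loop_iso_def
    proof (intro conjI ballI)
      show "bij_betw C G H" by fact
      fix x y assume "x \<in> G" "y \<in> G"
      thus "C (m x y) = n (C x) (C y)" using iso[of x y] AU[of x] BV[of y] P[OF CH CH] by simp
    qed
  qed
  have part2: "loop_iso G m H n C \<Longrightarrow> autotopism H n V U (\<lambda>x. n b' (n x a'))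
           \<and> ((\<forall>y\<in>H. n y y = e') \<longrightarrow>
                autotopism H n (\<lambda>x. n x a') (\<lambda>x. n b' x) (\<lambda>x. n b' (n x a')))"
  proof -
    assume ci: "loop_iso G m H n C"
    hence P: "\<And>x y. x \<in> H \<Longrightarrow> y \<in> H \<Longrightarrow> n (U x) (V y) = n x y"
      using part1 unfolding autotopism_def isotopism_def by simp
    have "C (m e e) = n (C e) (C e)" using ci eG unfolding loop_iso_def by blast
    hence "n (C e) (C e) = C e" using loop_lid[OF lG eG] by simp
    hence "n (C e) (C e) = n (C e) e'" using loop_rid[OF lH CH[OF eG]] by simp
    hence Ce: "C e = e'" by (rule loop_lcancel[OF lH CH[OF eG] CH[OF eG] e'H])
    have ab: "n a' b' = e'" using iso[OF eG eG] loop_lid[OF lG eG] Ce a'_def b'_def by simp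
    have Ve: "V e' = b'" by (rule loop_lcancel[OF lH aH VH[OF e'H] bH]) (use K2[OF e'H] ab in simp)
    have Ue: "U e' = a'" by (rule loop_rcancel[OF lH bH UH[OF e'H] aH]) (use K1[OF e'H] ab in simp)
    have Pi: "\<And>x y. x \<in> H \<Longrightarrow> y \<in> H \<Longrightarrow> n x y = n (n x b') (n a' y)"
    proof -
      fix x y assume xy: "x \<in> H" "y \<in> H"
      have "U (n x b') = x" by (rule loop_rcancel[OF lH bH UH[OF cl[OF xy(1) bH]] xy(1)]) (use K1[OF cl[OF xy(1) bH]] in simp)
      moreover have "V (n a' y) = y" by (rule loop_lcancel[OF lH aH VH[OF cl[OF aH xy(2)]] xy(2)]) (use K2[OF cl[OF aH xy(2)]] in simp)
      ultimately show "n x y = n (n x b') (n a' y)" using P[OF cl[OF xy(1) bH] cl[OF aH xy(2)]] by simp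
    qed
    have ba: "\<And>y. y \<in> H \<Longrightarrow> n b' (n a' y) = y"
      using Pi[OF e'H] loop_lid[OF lH] bH by simp
    have ab2: "\<And>y. y \<in> H \<Longrightarrow> n a' (n b' y) = y"
    proof -
      fix y assume yH: "y \<in> H"
      obtain w where w: "w \<in> H" "n a' w = y" using loop_lsolve[OF lH aH yH] by blast
      thus "n a' (n b' y) = y" using ba[OF w(1)] by simp
    qed
    have ba2: "\<And>x. x \<in> H \<Longrightarrow> n (n x b') a' = x"
      using Pi[OF _ e'H] loop_rid[OF lH] aH by simp
    have ab3: "\<And>x. x \<in> H \<Longrightarrow> n (n x a') b' = x"
    proof -
      fix x assume xH: "x \<in> H"
      obtain w where w: "w \<in> H" "n w b' = x" using loop_rsolve[OF lH bH xH] by blast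
      have "n x a' = w" using ba2[OF w(1)] w(2) by simp
      thus "n (n x a') b' = x" using w(2) by simp
    qed
    have VL: "\<And>y. y \<in> H \<Longrightarrow> V y = n b' y"
    proof -
      fix y assume yH: "y \<in> H"
      show "V y = n b' y" by (rule loop_lcancel[OF lH aH VH[OF yH] cl[OF bH yH]]) (use K2[OF yH] ab2[OF yH] in simp)
    qed
    have UR: "\<And>x. x \<in> H \<Longrightarrow> U x = n x a'"
    proof -
      fix x assume xH: "x \<in> H"
      show "U x = n x a'" by (rule loop_rcancel[OF lH bH UH[OF xH] cl[OF xH aH]]) (use K1[OF xH] ab3[OF xH] in simp)
    qed
    have Q: "\<And>x y. x \<in> H \<Longrightarrow> y \<in> H \<Longrightarrow> n (n x a') (n b' y) = n x y"
      using P UR VL by simp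
    have c1: "\<And>y z. y \<in> H \<Longrightarrow> z \<in> H \<Longrightarrow> n (n b' y) z = n b' (n y z)"
    proof -
      fix y z assume yz: "y \<in> H" "z \<in> H"
      define x where "x = linv H n e' (n y z)"
      have xH: "x \<in> H" and x1: "n x (n y z) = e'" using linv_prop[OF lH cl[OF yz]] x_def by auto
      have "n (n x y) z = e'" using wip2[OF WH xH yz x1] .
      hence "n (n (n x a') (n b' y)) z = e'" using Q[OF xH yz(1)] by simp
      hence "n (n x a') (n (n b' y) z) = e'" using wip1[OF WH cl[OF xH aH] cl[OF bH yz(1)] yz(2)] by simp
      hence "rinv H n e' (n x a') = n (n b' y) z"
        using rinv_unique[OF lH cl[OF xH aH] cl[OF cl[OF bH yz(1)] yz(2)]] by simp
      moreover have "rinv H n e' (n x a') = V (n y z)" unfolding V_def x_def ..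
      ultimately show "n (n b' y) z = n b' (n y z)" using VL[OF cl[OF yz]] by simp
    qed
    have c2: "\<And>z y. z \<in> H \<Longrightarrow> y \<in> H \<Longrightarrow> n z (n y a') = n (n z y) a'"
    proof -
      fix z y assume zy: "z \<in> H" "y \<in> H"
      define x where "x = rinv H n e' (n z y)"
      have xH: "x \<in> H" and x1: "n (n z y) x = e'" using rinv_prop[OF lH cl[OF zy]] x_def by auto
      have "n z (n y x) = e'" using wip1[OF WH zy xH x1] .
      hence "n z (n (n y a') (n b' x)) = e'" using Q[OF zy(2) xH] by simp
      hence "n (n z (n y a')) (n b' x) = e'" using wip2[OF WH zy(1) cl[OF zy(2) aH] cl[OF bH xH]] by simp
      hence "linv H n e' (n b' x) = n z (n y a')"
        using linv_unique[OF lH cl[OF bH xH] cl[OF zy(1) cl[OF zy(2) aH]]] by simp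
      moreover have "linv H n e' (n b' x) = U (n z y)" unfolding U_def x_def ..
      ultimately show "n z (n y a') = n (n z y) a'" using UR[OF cl[OF zy]] by simp
    qed
    have bW: "bij_betw (\<lambda>x. n b' (n x a')) H H"
    proof -
      have "bij_betw ((\<lambda>x. n b' x) \<circ> (\<lambda>x. n x a')) H H"
        using bij_betw_trans[OF bij_R[OF lH aH] bij_L[OF lH bH]] .
      thus ?thesis by (simp add: comp_def)
    qed
    have A2: "autotopism H n V U (\<lambda>x. n b' (n x a'))"
      unfolding autotopism_def isotopism_def
    proof (intro conjI ballI)
      show "bij_betw V H H" by fact
      show "bij_betw U H H" by fact
      show "bij_betw (\<lambda>x. n b' (n x a')) H H" by fact
      fix x y assume xy: "x \<in> H" "y \<in> H"
      have "n (V x) (U y) = n (n b' x) (n y a')" using VL UR xy by simp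
      also have "\<dots> = n b' (n x (n y a'))" using c1 xy cl aH by simp
      also have "\<dots> = n b' (n (n x y) a')" using c2 xy by simp
      finally show "n (V x) (U y) = n b' (n (n x y) a')" .
    qed
    have A3: "(\<forall>y\<in>H. n y y = e') \<Longrightarrow>
                autotopism H n (\<lambda>x. n x a') (\<lambda>x. n b' x) (\<lambda>x. n b' (n x a'))"
    proof -
      assume sq: "\<forall>y\<in>H. n y y = e'"
      have "n a' a' = e'" using sq aH by simp
      hence "n a' b' = n a' a'" using ab by simp
      hence ba': "b' = a'" by (rule loop_lcancel[OF lH aH bH aH])
      show ?thesis unfolding autotopism_def isotopism_def
      proof (intro conjI ballI)
        show "bij_betw (\<lambda>x. n x a') H H" using bij_R[OF lH aH] .
        show "bij_betw (\<lambda>x. n b' x) H H" using bij_L[OF lH bH] .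
        show "bij_betw (\<lambda>x. n b' (n x a')) H H" by fact
        fix x y assume xy: "x \<in> H" "y \<in> H"
        define t where "t = n x y"
        have tH: "t \<in> H" using cl xy t_def by simp
        define s where "s = n t a'"
        have sH: "s \<in> H" using cl tH aH s_def by simp
        have "n (n t a') s = e'" using sq sH s_def by simp
        hence "n t (n a' s) = e'" using wip1[OF WH tH aH sH] by simp
        hence "n t (n a' s) = n t t" using sq tH by simp
        hence "n a' s = t" by (rule loop_lcancel[OF lH tH cl[OF aH sH] tH])
        thus "n (n x a') (n b' y) = n b' (n (n x y) a')" using Q xy t_def s_def ba' by simp
      qed
    qed
    show ?thesis using A2 A3 by blast
  qed
  show ?thesis using part1 part2 unfolding U_def V_def by blast
qed

end
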